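(* Let $(X,d)$ be a metric space, $\mathcal{R}$ an arbitrary binary relation on $X$, and $p$ a $w$-distance on $X$ with respect to $\mathcal{R}$. Let $T:X\to X$ satisfy: (1) there exists $Y\subseteq X$ with $T(X)\subseteq Y$ such that $(Y,d)$ is $\mathcal{R}$-complete; (2) $X(T,\mathcal{R})\neq\emptyset$ and $\mathcal{R}$ is $T$-closed; (3) either $T$ is $\mathcal{R}$-continuous, or $\mathcal{R}|_Y$ is $d$-self-closed; (4) there exists $\lambda\in[0,1)$ such that $p(Tx,Ty)\le\lambda\,p(x,y)$ for all $x,y\in X$ with $(x,y)\in\mathcal{R}$. Then $T$ has a fixed point, i.e. $F(T)=\{x\in X: Tx=x\}\neq\emptyset$.
   Context: A binary relation $\mathcal{R}$ on $X$ is a subset of $X\times X$. A sequence $(x_n)$ is $\mathcal{R}$-preserving if $(x_n,x_{n+1})\in\mathcal{R}$ for all $n\in\mathbb{N}\cup\{0\}$. $(Y,d)$ is $\mathcal{R}$-complete if every $\mathcal{R}$-preserving Cauchy sequence in $Y$ converges in $Y$. $X(T,\mathcal{R})=\{x\in X:(x,Tx)\in\mathcal{R}\}$. $\mathcal{R}$ is $T$-closed if $(x,y)\in\mathcal{R}$ implies $(Tx,Ty)\in\mathcal{R}$. $T$ is $\mathcal{R}$-continuous if for every $x\in X$ and every $\mathcal{R}$-preserving sequence $x_n\to x$ one has $Tx_n\to Tx$. $\mathcal{R}|_Y=\mathcal{R}\cap(Y\times Y)$ is $d$-self-closed if for every $\mathcal{R}|_Y$-preserving sequence $(x_n)$ in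 $Y$ with $x_n\to x$ there is a subsequence $(x_{n_k})$ with $(x_{n_k},x)\in\mathcal{R}|_Y$ for all $k$. A function $g:X\to\mathbb{R}\cup\{\pm\infty\}$ is $\mathcal{R}$-lower semi-continuous at $x$ if for every $\mathcal{R}$-preserving sequence $x_n\to x$, $\liminf_n g(x_n)\ge g(x)$. A function $p:X\times X\to[0,\infty)$ is a $w$-distance with respect to $\mathcal{R}$ if: (w1') $p(x,z)\le p(x,y)+p(y,z)$ for all $x,y,z$; (w2') for each $x$, $p(x,\cdot)$ is $\mathcal{R}$-lower semi-continuous at every point; (w3') for every $\epsilon>0$ there is $\delta>0$ such that $p(z,x)\le\delta$ and $p(z,y)\le\delta$ imply $d(x,y)\le\epsilon$. *)

theory Defs
  imports "HOL-Analysis.Analysis"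
begin

text \<open>Metric space (X,d): X is the whole carrier of a type of class metric_space, d = dist.\<close>

definition R_preserving :: "('a \<times> 'a) set \<Rightarrow> (nat \<Rightarrow> 'a) \<Rightarrow> bool" where
  "R_preserving R x \<longleftrightarrow> (\<forall>n. (x n, x (Suc n)) \<in> R)"

definition R_complete :: "('a::metric_space \<times> 'a) set \<Rightarrow> 'a set \<Rightarrow> bool" where
  "R_complete R Y \<longleftrightarrow> (\<forall>(x::nat \<Rightarrow> 'a). (\<forall>n. x n \<in> Y) \<and> R_preserving R x \<and> Cauchy x
      \<longrightarrow> (\<exists>l\<in>Y. x \<longlonglongrightarrow> l))"

definition X_TR :: "('a \<Rightarrow> 'a) \<Rightarrow> ('a \<times> 'a) set \<Rightarrow> 'a set" where
  "X_TR T R = {x. (x, T x) \<in> R}"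

definition T_closed :: "('a \<times> 'a) set \<Rightarrow> ('a \<Rightarrow> 'a) \<Rightarrow> bool" where
  "T_closed R T \<longleftrightarrow> (\<forall>x y. (x, y) \<in> R \<longrightarrow> (T x, T y) \<in> R)"

definition R_continuous :: "('a::metric_space \<times> 'a) set \<Rightarrow> ('a \<Rightarrow> 'a) \<Rightarrow> bool" where
  "R_continuous R T \<longleftrightarrow> (\<forall>x (s::nat \<Rightarrow> 'a). R_preserving R s \<and> s \<longlonglongrightarrow> x \<longrightarrow> (\<lambda>n. T (s n)) \<longlonglongrightarrow> T x)"

definition restrict_rel :: "('a \<times> 'a) set \<Rightarrow> 'a set \<Rightarrow> ('a \<times> 'a) set" where
  "restrict_rel R Y = R \<inter> (Y \<times> Y)"

definition d_self_closed_on :: "('a::metric_space \<times> 'a) set \<Rightarrow> 'a set \<Rightarrow> bool" where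
  "d_self_closed_on R Y \<longleftrightarrow> (\<forall>(s::nat \<Rightarrow> 'a) x. (\<forall>n. s n \<in> Y) \<and> R_preserving (restrict_rel R Y) s \<and> s \<longlonglongrightarrow> x
      \<longrightarrow> (\<exists>r::nat \<Rightarrow> nat. strict_mono r \<and> (\<forall>k. (s (r k), x) \<in> restrict_rel R Y)))"

definition R_lsc_at :: "('a::metric_space \<times> 'a) set \<Rightarrow> ('a \<Rightarrow> ereal) \<Rightarrow> 'a \<Rightarrow> bool" where
  "R_lsc_at R g x \<longleftrightarrow> (\<forall>(s::nat \<Rightarrow> 'a). R_preserving R s \<and> s \<longlonglongrightarrow> x \<longrightarrow> liminf (\<lambda>n. g (s n)) \<ge> g x)"

definition w_distance_wrt :: "('a::metric_space \<times> 'a) set \<Rightarrow> ('a \<Rightarrow> 'a \<Rightarrow> real) \<Rightarrow> bool" where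
  "w_distance_wrt R p \<longleftrightarrow>
     (\<forall>x y. p x y \<ge> 0) \<and>
     (\<forall>x y z. p x z \<le> p x y + p y z) \<and>
     (\<forall>x y. R_lsc_at R (\<lambda>z. ereal (p x z)) y) \<and>
     (\<forall>\<epsilon>>0. \<exists>\<delta>>0. \<forall>x y z. p z x \<le> \<delta> \<and> p z y \<le> \<delta> \<longrightarrow> dist x y \<le> \<epsilon>)"

end

theory Submission
  imports Defs
begin

theorem theorem2p1:
  fixes R :: "('a::metric_space \<times> 'a) set"
    and p :: "'a \<Rightarrow> 'a \<Rightarrow> real"
    and T :: "'a \<Rightarrow> 'a"
  assumes "w_distance_wrt R p"
    and "\<exists>Y. range T \<subseteq> Y \<and> R_complete R Y \<and>
           (R_continuous R T \<or> d_self_closed_on R Y)"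
    and "X_TR T R \<noteq> {}"
    and "T_closed R T"
    and "\<exists>lam. 0 \<le> lam \<and> lam < 1 \<and> (\<forall>x y. (x, y) \<in> R \<longrightarrow> p (T x) (T y) \<le> lam * p x y)"
  shows "{x. T x = x} \<noteq> {}"
proof -
  obtain Y where Y: "range T \<subseteq> Y" "R_complete R Y" "R_continuous R T \<or> d_self_closed_on R Y"
    using assms(2) by blast
  obtain lam where lam: "0 \<le> lam" "lam < 1" "\<And>x y. (x, y) \<in> R \<Longrightarrow> p (T x) (T y) \<le> lam * p x y"
    using assms(5) by blast
  obtain x0 where x0: "(x0, T x0) \<in> R" using assms(3) unfolding X_TR_def by blast
  have pnn: "\<And>x y. p x y \<ge> 0" and ptri: "\<And>x y z. p x z \<le> p x y + p y z"
    and plsc: "\<And>x y. R_lsc_at R (\<lambda>z. ereal (p x z)) y"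
    and pw3: "\<And>e. e > 0 \<Longrightarrow> \<exists>\<delta>>0. \<forall>x y z. p z x \<le> \<delta> \<and> p z y \<le> \<delta> \<longrightarrow> dist x y \<le> e"
    using assms(1) unfolding w_distance_wrt_def by auto
  define x where "x n = (T ^^ n) x0" for n
  have xs: "x (Suc n) = T (x n)" for n by (simp add: x_def)
  have xR: "(x n, x (Suc n)) \<in> R" for n
  proof (induction n)
    case 0 then show ?case using x0 by (simp add: x_def)
  next
    case (Suc n) then show ?case using assms(4) unfolding T_closed_def by (simp add: xs)
  qed
  define c where "c = p x0 (T x0)"
  have c0: "c \<ge> 0" using pnn c_def by simp
  have step: "p (x n) (x (Suc n)) \<le> c * lam ^ n" for n
  proof (induction n)
    case 0 then show ?case by (simp add: x_def c_def)
  next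
    case (Suc n)
    have "p (x (Suc n)) (x (Suc (Suc n))) \<le> lam * p (x n) (x (Suc n))"
      using lam(3)[OF xR[of n]] by (simp add: xs)
    also have "\<dots> \<le> lam * (c * lam ^ n)" using Suc lam(1) by (simp add: mult_left_mono)
    finally show ?case by (simp add: algebra_simps)
  qed
  define B where "B n = c * lam ^ n / (1 - lam)" for n
  have B0: "B \<longlonglongrightarrow> 0"
  proof -
    have "(\<lambda>n. lam ^ n) \<longlonglongrightarrow> 0" by (rule LIMSEQ_power_zero) (use lam in simp)
    then have "(\<lambda>n. c * lam ^ n / (1 - lam)) \<longlonglongrightarrow> c * 0 / (1 - lam)"
      by (intro tendsto_divide tendsto_mult tendsto_const) (use lam in auto)
    moreover have "B = (\<lambda>n. c * lam ^ n / (1 - lam))" by (simp add: B_def fun_eq_iff)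
    ultimately show ?thesis by simp
  qed
  have Bmono: "B m \<le> B n" if "n \<le> m" for m n
  proof -
    have "lam ^ m \<le> lam ^ n" using lam that by (simp add: power_decreasing)
    then show ?thesis unfolding B_def using c0 lam
      by (intro divide_right_mono mult_left_mono) auto
  qed
  have pgen: "p (x n) (x m) \<le> c * (lam ^ n - lam ^ m) / (1 - lam)" if "n < m" for n m
    using that
  proof (induction m)
    case 0 then show ?case by simp
  next
    case (Suc m)
    show ?case
    proof (cases "n = m")
      case True
      have "c * lam ^ n = c * (lam ^ n - lam ^ Suc n) / (1 - lam)"
        using lam by (simp add: field_simps)
      then show ?thesis using step[of n] True by simp
    next
      case False
      then have nm: "n < m" using Suc by simp
      have "p (x n) (x (Suc m)) \<le> p (x n) (x m) + p (x m) (x (Suc m))" by (rule ptri)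
      also have "\<dots> \<le> c * (lam ^ n - lam ^ m) / (1 - lam) + c * lam ^ m"
        using Suc.IH[OF nm] step[of m] by simp
      also have "\<dots> = c * (lam ^ n - lam ^ Suc m) / (1 - lam)"
        using lam by (simp add: field_simps)
      finally show ?thesis .
    qed
  qed
  have pB: "p (x n) (x m) \<le> B n" if "n < m" for n m
  proof -
    have "c * (lam ^ n - lam ^ m) / (1 - lam) \<le> B n" unfolding B_def using c0 lam
      by (intro divide_right_mono mult_left_mono) auto
    then show ?thesis using pgen[OF that] by simp
  qed
  have Bsmall: "\<exists>N. \<forall>n\<ge>N. B n \<le> d" if "d > 0" for d
  proof -
    from B0 that have "eventually (\<lambda>n. B n < d) sequentially"
      by (simp add: order_tendsto_iff)
    then show ?thesis unfolding eventually_sequentially by (meson less_imp_le)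
  qed
  define y where "y n = x (Suc n)" for n
  have yY: "y n \<in> Y" for n using Y(1) by (auto simp: y_def xs)
  have yR: "R_preserving R y" unfolding R_preserving_def y_def using xR by simp
  have yC: "Cauchy y"
    unfolding Cauchy_def
  proof (intro allI impI)
    fix e :: real assume e: "e > 0"
    obtain d where d: "d > 0" "\<And>a b z. p z a \<le> d \<Longrightarrow> p z b \<le> d \<Longrightarrow> dist a b \<le> e / 2"
      using pw3[of "e/2"] e by auto
    obtain N where N: "\<And>n. n \<ge> N \<Longrightarrow> B n \<le> d" using Bsmall[OF d(1)] by blast
    show "\<exists>M. \<forall>m\<ge>M. \<forall>n\<ge>M. dist (y m) (y n) < e"
    proof (intro exI allI impI)
      fix m n assume "m \<ge> N" "n \<ge> N"
      then have "p (x N) (y m) \<le> d" "p (x N) (y n) \<le> d"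
        using pB[of N "Suc m"] pB[of N "Suc n"] N[of N] by (auto simp: y_def)
      then have "dist (y m) (y n) \<le> e / 2" by (rule d(2))
      then show "dist (y m) (y n) < e" using e by simp
    qed
  qed
  obtain u where u: "u \<in> Y" "y \<longlonglongrightarrow> u"
    using Y(2) yY yR yC unfolding R_complete_def by blast
  have yT: "(\<lambda>n. T (y n)) = (\<lambda>n. y (Suc n))" by (simp add: y_def xs)
  have "T u = u"
    using Y(3)
  proof
    assume "R_continuous R T"
    then have "(\<lambda>n. T (y n)) \<longlonglongrightarrow> T u" using yR u unfolding R_continuous_def by blast
    moreover have "(\<lambda>n. T (y n)) \<longlonglongrightarrow> u" unfolding yT using u(2) by (rule LIMSEQ_Suc)
    ultimately show "T u = u" using LIMSEQ_unique by blast
  next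
    assume "d_self_closed_on R Y"
    then obtain r :: "nat \<Rightarrow> nat" where r: "strict_mono r" "\<And>k. (y (r k), u) \<in> R"
      using yY yR u unfolding d_self_closed_on_def restrict_rel_def R_preserving_def by blast
    have pu: "p (x n) u \<le> B n" for n
    proof -
      have "liminf (\<lambda>m. ereal (p (x n) (y m))) \<ge> ereal (p (x n) u)"
        using plsc[of "x n" u] yR u unfolding R_lsc_at_def by blast
      moreover have "liminf (\<lambda>m. ereal (p (x n) (y m))) \<le> ereal (B n)"
      proof -
        have ev: "eventually (\<lambda>m. ereal (p (x n) (y m)) \<le> ereal (B n)) sequentially"
          unfolding eventually_sequentially
          by (rule exI[of _ n]) (auto simp: y_def intro: pB)
        have "liminf (\<lambda>m. ereal (p (x n) (y m))) \<le> limsup (\<lambda>m. ereal (p (x n) (y m)))"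
          by (rule Liminf_le_Limsup) simp
        also have "\<dots> \<le> ereal (B n)" using ev by (rule Limsup_bounded)
        finally show ?thesis .
      qed
      ultimately have "ereal (p (x n) u) \<le> ereal (B n)" by (rule order.trans)
      then show ?thesis by simp
    qed
    have de: "dist u (T u) \<le> e" if e: "e > 0" for e
    proof -
      obtain d where d: "d > 0" "\<And>a b z. p z a \<le> d \<Longrightarrow> p z b \<le> d \<Longrightarrow> dist a b \<le> e"
        using pw3[of e] e by auto
      obtain N where N: "\<And>n. n \<ge> N \<Longrightarrow> B n \<le> d" using Bsmall[OF d(1)] by blast
      have rN: "r N \<ge> N" using r(1) by (simp add: seq_suble)
      define z where "z = T (y (r N))"
      have "p z (T u) \<le> lam * p (y (r N)) u" unfolding z_def by (rule lam(3)[OF r(2)])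
      also have "\<dots> \<le> p (y (r N)) u" using lam pnn by (simp add: mult_left_le_one_le)
      also have "\<dots> \<le> B (Suc (r N))" using pu by (simp add: y_def)
      also have "\<dots> \<le> d" using N rN by simp
      finally have 1: "p z (T u) \<le> d" .
      have "p z u \<le> B (Suc (Suc (r N)))" using pu[of "Suc (Suc (r N))"] by (simp add: z_def y_def xs)
      also have "\<dots> \<le> d" using N rN by simp
      finally have 2: "p z u \<le> d" .
      show ?thesis using d(2)[OF 2 1] .
    qed
    have "dist u (T u) \<le> 0 + e" if "e > 0" for e using de[OF that] by simp
    then have "dist u (T u) \<le> 0"
      by (rule field_le_epsilon)
    then have "dist u (T u) = 0" by simp
    then show "T u = u" by simp
  qed
  then show ?thesis by blast
qed

end
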